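(* Let $\kappa$ be a regular uncountable cardinal with $\kappa^{<\kappa}=\kappa$ and $\gamma^\omega<\kappa$ for all $\gamma<\kappa$. There is a $\kappa$-representation $\langle I^0_\alpha\mid\alpha<\kappa\rangle$ of $I^0$ such that for every limit ordinal $\delta<\kappa$ and every $\nu\in I^0$ with $\nu\notin I^0_\delta$ there is $\beta<\delta$ satisfying: for every $\sigma\in I^0_\delta$ with $\sigma>\nu$ there is $\sigma'\in I^0_\beta$ with $\sigma>\sigma'>\nu$.
   Context: Let $\mathbb Q$ be the rationals and order $\kappa\times\mathbb Q$ lexicographically. $I^0$ is the set of functions $f:\omega\to\kappa\times\mathbb Q$, written $f(n)=(f_1(n),f_2(n))$, such that $\{n<\omega\mid f_1(n)\ne0\}$ is finite, ordered by $f<g$ iff $f(n)<g(n)$ for the least $n$ with $f(n)\ne g(n)$. A $\kappa$-representation of a set $A$ of size $\le\kappa$ is an increasing continuous sequence of subsets of $A$, each of size $<\kappa$, whose union is $A$. *)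

theory Defs
  imports Main "HOL-Library.Countable_Set" Complex_Main
begin

text \<open>The cardinal kappa is represented by a cardinal well-order r whose field is
the whole type 'k; its elements are the ordinals below kappa.\<close>

definition kless :: "'k rel \<Rightarrow> 'k \<Rightarrow> 'k \<Rightarrow> bool" where
  "kless r a b \<longleftrightarrow> a \<noteq> b \<and> (a, b) \<in> r"

definition kzero :: "'k rel \<Rightarrow> 'k" where
  "kzero r = (THE a. \<forall>b. (a, b) \<in> r)"

definition klimit :: "'k rel \<Rightarrow> 'k \<Rightarrow> bool" where
  "klimit r d \<longleftrightarrow> d \<noteq> kzero r \<and> (\<forall>a. kless r a d \<longrightarrow> (\<exists>b. kless r a b \<and> kless r b d))"

definition pless :: "'k rel \<Rightarrow> 'k \<times> rat \<Rightarrow> 'k \<times> rat \<Rightarrow> bool" where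
  "pless r x y \<longleftrightarrow> kless r (fst x) (fst y) \<or> (fst x = fst y \<and> snd x < snd y)"

definition I0 :: "'k rel \<Rightarrow> (nat \<Rightarrow> 'k \<times> rat) set" where
  "I0 r = {f. finite {n. fst (f n) \<noteq> kzero r}}"

definition Iless :: "'k rel \<Rightarrow> (nat \<Rightarrow> 'k \<times> rat) \<Rightarrow> (nat \<Rightarrow> 'k \<times> rat) \<Rightarrow> bool" where
  "Iless r f g \<longleftrightarrow> (\<exists>n. (\<forall>m<n. f m = g m) \<and> pless r (f n) (g n))"

definition krep :: "'k rel \<Rightarrow> 'a set \<Rightarrow> ('k \<Rightarrow> 'a set) \<Rightarrow> bool" where
  "krep r A X \<longleftrightarrow>
     (\<forall>a. X a \<subseteq> A) \<and>
     (\<forall>a b. (a, b) \<in> r \<longrightarrow> X a \<subseteq> X b) \<and>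
     (\<forall>d. klimit r d \<longrightarrow> X d = (\<Union>a\<in>{a. kless r a d}. X a)) \<and>
     (\<forall>a. (card_of (X a), r) \<in> ordLess) \<and>
     (\<Union>a. X a) = A"

end

theory Submission imports Defs begin
unbundle cardinal_syntax

context
  fixes r :: "'k rel"
  assumes card: "Card_order r" and fld: "Field r = UNIV"
begin

lemma wo: "wo_rel r" using card unfolding card_order_on_def wo_rel_def by simp

lemma refl: "(a,a) \<in> r"
  using wo fld unfolding wo_rel_def well_order_on_def linear_order_on_def partial_order_on_def preorder_on_def refl_on_def by auto

lemma trans': "(a,b) \<in> r \<Longrightarrow> (b,c) \<in> r \<Longrightarrow> (a,c) \<in> r"
  using wo unfolding wo_rel_def well_order_on_def linear_order_on_def partial_order_on_def preorder_on_def trans_def by blast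

lemma antisym': "(a,b) \<in> r \<Longrightarrow> (b,a) \<in> r \<Longrightarrow> a = b"
  using wo unfolding wo_rel_def well_order_on_def linear_order_on_def partial_order_on_def antisym_def by blast

lemma total': "a \<noteq> b \<Longrightarrow> (a,b) \<in> r \<or> (b,a) \<in> r"
  using wo fld unfolding wo_rel_def well_order_on_def linear_order_on_def total_on_def by blast

lemma kless_trans: "kless r a b \<Longrightarrow> kless r b c \<Longrightarrow> kless r a c"
  unfolding kless_def using trans' antisym' by blast

lemma kless_le_trans: "kless r a b \<Longrightarrow> (b,c) \<in> r \<Longrightarrow> kless r a c"
  unfolding kless_def using trans' antisym' by blast

lemma not_kless: "\<not> kless r a b \<Longrightarrow> (b,a) \<in> r"
  unfolding kless_def by (metis total' refl)

lemma kzero_least: "(kzero r, b) \<in> r"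
proof -
  have ex: "\<exists>a. \<forall>b. (a,b) \<in> r"
    using wo_rel.minim_least[OF wo, of UNIV] fld by auto
  have "\<forall>b. (kzero r, b) \<in> r"
    unfolding kzero_def
    apply (rule theI')
    using ex antisym' by blast
  thus ?thesis by blast
qed

lemma kzero_less: "d \<noteq> kzero r \<Longrightarrow> kless r (kzero r) d"
  unfolding kless_def using kzero_least by auto

lemma lim_bound:
  assumes lim: "klimit r d" and fin: "finite F"
  shows "(\<forall>x\<in>F. kless r x d) \<Longrightarrow> \<exists>b. kless r b d \<and> (\<forall>x\<in>F. kless r x b)"
  using fin
proof (induction F)
  case empty
  then show ?case using lim kzero_less unfolding klimit_def by blast
next
  case (insert x F)
  then obtain b where b: "kless r b d" "\<forall>y\<in>F. kless r y b" by auto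
  have x: "kless r x d" using insert by auto
  obtain m where m: "kless r m d" "(x,m) \<in> r" "(b,m) \<in> r"
    using x b(1) total' refl by metis
  then obtain c where "kless r m c" "kless r c d" using lim unfolding klimit_def by blast
  then show ?case using b m kless_trans kless_le_trans
    by (metis insert_iff kless_def kless_trans)
qed

lemma nomax: "infinite (UNIV :: 'k set) \<Longrightarrow> \<exists>b. kless r a b"
proof -
  assume inf: "infinite (UNIV :: 'k set)"
  have "UNIV \<noteq> under r a" using Card_order_infinite_not_under[OF card] fld inf by auto
  then obtain b where "(b,a) \<notin> r" unfolding under_def by auto
  thus ?thesis using not_kless by blast
qed

lemma fin_bound:
  assumes inf: "infinite (UNIV :: 'k set)" and fin: "finite F"
  shows "\<exists>b. \<forall>x\<in>F. kless r x b"
  using fin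
proof (induction F)
  case empty then show ?case by simp
next
  case (insert x F)
  then obtain b where b: "\<forall>y\<in>F. kless r y b" by auto
  obtain m where m: "(x,m) \<in> r" "(b,m) \<in> r" using total' refl by metis
  obtain c where "kless r m c" using nomax[OF inf] by blast
  then show ?case using b m kless_le_trans
    by (metis insert_iff kless_def kless_trans)
qed


definition XX :: "'k \<Rightarrow> (nat \<Rightarrow> 'k \<times> rat) set" where
  "XX a = {f \<in> I0 r. \<forall>n. kless r (fst (f n)) a}"

lemma fin_range: "f \<in> I0 r \<Longrightarrow> finite (range (\<lambda>n. fst (f n)))"
proof -
  assume "f \<in> I0 r"
  hence "finite {n. fst (f n) \<noteq> kzero r}" unfolding I0_def by simp
  hence "finite (insert (kzero r) ((\<lambda>n. fst (f n)) ` {n. fst (f n) \<noteq> kzero r}))" by simp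
  moreover have "range (\<lambda>n. fst (f n)) \<subseteq> insert (kzero r) ((\<lambda>n. fst (f n)) ` {n. fst (f n) \<noteq> kzero r})"
    by auto
  ultimately show ?thesis using finite_subset by blast
qed

lemma XX_size:
  assumes unc: "(card_of (UNIV :: nat set), r) \<in> ordLess"
    and omega_pow: "\<forall>A :: 'k set. (card_of A, r) \<in> ordLess \<longrightarrow> (card_of (Func (UNIV :: nat set) A), r) \<in> ordLess"
  shows "(card_of (XX a), r) \<in> ordLess"
proof -
  define A where "A = underS r a"
  have A: "|A| <o r" unfolding A_def using card_of_underS[OF card] fld by auto
  have "|UNIV :: nat set| \<le>o |UNIV :: 'k set|"
    using unc card_of_Field_ordIso[OF card] fld ordLess_imp_ordLeq ordLeq_ordIso_trans ordIso_symmetric by metis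
  then obtain h :: "nat \<Rightarrow> 'k" where h: "inj h" using card_of_ordLeq[of "UNIV::nat set" "UNIV :: 'k set"] by auto
  define B where "B = A \<union> range h"
  have infF: "\<not> finite (Field r)" using fld h finite_imageD[of h UNIV] by (metis finite_subset subset_UNIV infinite_UNIV_nat)
  have rh: "|range h| <o r"
    using card_of_image[of h UNIV] unc ordLeq_ordLess_trans by blast
  have B: "|B| <o r" unfolding B_def using card_of_Un_ordLess_infinite_Field[OF infF card A rh] .
  have infB: "infinite B" unfolding B_def using h finite_imageD[of h UNIV] by (metis finite_Un infinite_UNIV_nat)
  have "|UNIV :: rat set| \<le>o |range h|"
  proof -
    have "|UNIV :: rat set| \<le>o |UNIV :: nat set|" using card_of_ordLeq[of "UNIV::rat set" "UNIV::nat set"] inj_to_nat[where ?'a=rat] by blast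
    moreover have "|UNIV :: nat set| \<le>o |range h|" using card_of_ordLeq[of "UNIV::nat set" "range h"] h by auto
    ultimately show ?thesis using ordLeq_transitive by blast
  qed
  hence "|UNIV :: rat set| \<le>o |B|" unfolding B_def using card_of_mono1[of "range h" "A \<union> range h"] ordLeq_transitive by blast
  moreover have "|A| \<le>o |B|" unfolding B_def by (rule card_of_mono1) blast
  ultimately have "|A \<times> (UNIV :: rat set)| \<le>o |B \<times> B|"
    using card_of_Times_mono1[of A B "UNIV :: rat set"] card_of_Times_mono2[of "UNIV :: rat set" B B] ordLeq_transitive by blast
  hence "|A \<times> (UNIV :: rat set)| \<le>o |B|"
    by (rule ordLeq_ordIso_trans[OF _ card_of_Times_same_infinite[OF infB]])
  then obtain g where g: "inj_on g (A \<times> (UNIV :: rat set))" "g ` (A \<times> UNIV) \<subseteq> B"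
    using card_of_ordLeq[of "A \<times> (UNIV :: rat set)" B] by blast
  have XA: "\<And>f n. f \<in> XX a \<Longrightarrow> f n \<in> A \<times> UNIV"
    unfolding XX_def A_def underS_def kless_def by (auto simp: mem_Times_iff)
  have "inj_on (\<lambda>f. g \<circ> f) (XX a)"
  proof (rule inj_onI)
    fix f1 f2 assume f: "f1 \<in> XX a" "f2 \<in> XX a" "g \<circ> f1 = g \<circ> f2"
    show "f1 = f2"
    proof
      fix n
      have "g (f1 n) = g (f2 n)" using f(3) by (metis comp_apply)
      thus "f1 n = f2 n" using g(1) XA f(1,2) inj_on_def by metis
    qed
  qed
  moreover have "(\<lambda>f. g \<circ> f) ` (XX a) \<subseteq> Func UNIV B"
    unfolding Func_def using g(2) XA by auto
  ultimately have "|XX a| \<le>o |Func (UNIV :: nat set) B|" using card_of_ordLeq[of "XX a" "Func (UNIV :: nat set) B"] by blast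
  moreover have "|Func (UNIV :: nat set) B| <o r" using omega_pow B by blast
  ultimately show ?thesis by (rule ordLeq_ordLess_trans)
qed


lemma XX_sub: "XX a \<subseteq> I0 r" unfolding XX_def by auto

lemma XX_mono: "(a, b) \<in> r \<Longrightarrow> XX a \<subseteq> XX b"
  unfolding XX_def using kless_le_trans by blast

lemma XX_cont: "klimit r d \<Longrightarrow> XX d = (\<Union>a\<in>{a. kless r a d}. XX a)"
proof
  assume lim: "klimit r d"
  show "XX d \<subseteq> (\<Union>a\<in>{a. kless r a d}. XX a)"
  proof
    fix f assume f: "f \<in> XX d"
    then obtain b where b: "kless r b d" "\<forall>x\<in>range (\<lambda>n. fst (f n)). kless r x b"
      using lim_bound[OF lim fin_range] XX_sub unfolding XX_def by (metis (no_types, lifting) mem_Collect_eq rangeE)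
    hence "f \<in> XX b" using f unfolding XX_def by auto
    thus "f \<in> (\<Union>a\<in>{a. kless r a d}. XX a)" using b by auto
  qed
next
  show "(\<Union>a\<in>{a. kless r a d}. XX a) \<subseteq> XX d"
    using XX_mono unfolding kless_def by blast
qed

lemma XX_union: "infinite (UNIV :: 'k set) \<Longrightarrow> (\<Union>a. XX a) = I0 r"
proof
  assume inf: "infinite (UNIV :: 'k set)"
  show "I0 r \<subseteq> (\<Union>a. XX a)"
  proof
    fix f assume f: "f \<in> I0 r"
    obtain b where "\<forall>x\<in>range (\<lambda>n. fst (f n)). kless r x b"
      using fin_bound[OF inf fin_range[OF f]] by blast
    hence "f \<in> XX b" using f unfolding XX_def by auto
    thus "f \<in> (\<Union>a. XX a)" by blast
  qed
qed (use XX_sub in blast)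

lemma XX_key:
  assumes lim: "klimit r d" and nu: "\<nu> \<in> I0 r" and nnu: "\<nu> \<notin> XX d"
  shows "\<exists>b. kless r b d \<and>
          (\<forall>\<sigma>\<in>XX d. Iless r \<nu> \<sigma> \<longrightarrow>
             (\<exists>\<sigma>'\<in>XX b. Iless r \<sigma>' \<sigma> \<and> Iless r \<nu> \<sigma>'))"
proof -
  have ex: "\<exists>n. \<not> kless r (fst (\<nu> n)) d" using nu nnu unfolding XX_def by auto
  define n0 where "n0 = (LEAST n. \<not> kless r (fst (\<nu> n)) d)"
  have n0: "\<not> kless r (fst (\<nu> n0)) d" unfolding n0_def using ex LeastI_ex by metis
  have bef: "\<And>m. m < n0 \<Longrightarrow> kless r (fst (\<nu> m)) d" unfolding n0_def using not_less_Least by blast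
  define F where "F = insert (kzero r) ((\<lambda>m. fst (\<nu> m)) ` {..<n0})"
  have dz: "d \<noteq> kzero r" using lim unfolding klimit_def by blast
  have Fd: "\<forall>x\<in>F. kless r x d" unfolding F_def using bef kzero_less[OF dz] by auto
  have Ff: "finite F" unfolding F_def by simp
  obtain b where b: "kless r b d" "\<forall>x\<in>F. kless r x b"
    using lim_bound[OF lim Ff Fd] by blast
  have bz: "kless r (kzero r) b" and bm: "\<And>m. m < n0 \<Longrightarrow> kless r (fst (\<nu> m)) b"
    using b(2) unfolding F_def by auto
  show ?thesis
  proof (intro exI conjI ballI impI)
    show "kless r b d" by fact
    fix \<sigma> assume s: "\<sigma> \<in> XX d" "Iless r \<nu> \<sigma>"
    then obtain n where n: "\<forall>m<n. \<nu> m = \<sigma> m" "pless r (\<nu> n) (\<sigma> n)" unfolding Iless_def by blast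
    have sd: "\<And>m. kless r (fst (\<sigma> m)) d" using s(1) unfolding XX_def by auto
    have "n < n0"
    proof (rule ccontr)
      assume "\<not> n < n0"
      hence "n0 < n \<or> n0 = n" by auto
      thus False
      proof
        assume "n0 < n" hence "\<nu> n0 = \<sigma> n0" using n(1) by auto
        thus False using sd[of n0] n0 by simp
      next
        assume e: "n0 = n"
        have "kless r (fst (\<nu> n)) (fst (\<sigma> n)) \<or> fst (\<nu> n) = fst (\<sigma> n)" using n(2) unfolding pless_def by auto
        thus False
        proof
          assume "kless r (fst (\<nu> n)) (fst (\<sigma> n))"
          hence "kless r (fst (\<nu> n)) d" using sd[of n] by (rule kless_trans)
          thus False using n0 e by simp
        next
          assume "fst (\<nu> n) = fst (\<sigma> n)"
          thus False using sd[of n] n0 e by simp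
        qed
      qed
    qed
    define p where "p = (if fst (\<nu> n) = fst (\<sigma> n) then (fst (\<nu> n), (snd (\<nu> n) + snd (\<sigma> n)) / 2)
                         else (fst (\<nu> n), snd (\<nu> n) + 1))"
    define \<sigma>' where "\<sigma>' = (\<lambda>m. if m < n then \<nu> m else if m = n then p else (kzero r, 0))"
    have pfst: "fst p = fst (\<nu> n)" unfolding p_def by auto
    have "{m. fst (\<sigma>' m) \<noteq> kzero r} \<subseteq> {..n}" unfolding \<sigma>'_def by auto
    hence "\<sigma>' \<in> I0 r" unfolding I0_def using finite_subset by blast
    moreover have "\<forall>m. kless r (fst (\<sigma>' m)) b"
      unfolding \<sigma>'_def using bm bz pfst \<open>n < n0\<close> by auto
    ultimately have "\<sigma>' \<in> XX b" unfolding XX_def by auto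
    moreover have "pless r p (\<sigma> n)"
    proof (cases "fst (\<nu> n) = fst (\<sigma> n)")
      case True
      hence "snd (\<nu> n) < snd (\<sigma> n)" using n(2) by (auto simp: pless_def kless_def)
      then show ?thesis using True unfolding p_def pless_def by auto
    next
      case False
      hence "kless r (fst (\<nu> n)) (fst (\<sigma> n))" using n(2) unfolding pless_def by auto
      then show ?thesis using False unfolding p_def pless_def by auto
    qed
    hence "Iless r \<sigma>' \<sigma>" unfolding Iless_def \<sigma>'_def using n(1) by (intro exI[of _ n]) auto
    moreover have "pless r (\<nu> n) p"
    proof (cases "fst (\<nu> n) = fst (\<sigma> n)")
      case True
      hence "snd (\<nu> n) < snd (\<sigma> n)" using n(2) by (auto simp: pless_def kless_def)
      then show ?thesis using True unfolding p_def pless_def by auto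
    next
      case False
      then show ?thesis unfolding p_def pless_def by auto
    qed
    hence "Iless r \<nu> \<sigma>'" unfolding Iless_def \<sigma>'_def by (intro exI[of _ n]) auto
    ultimately show "\<exists>\<sigma>'\<in>XX b. Iless r \<sigma>' \<sigma> \<and> Iless r \<nu> \<sigma>'" by blast
  qed
qed

end

theorem mainTheorem9:
  fixes r :: "'k rel"
  assumes card: "Card_order r" and fld: "Field r = UNIV"
    and reg: "regularCard r"
    and uncountable: "(card_of (UNIV :: nat set), r) \<in> ordLess"
    and small_pow: "\<forall>A :: 'k set. (card_of A, r) \<in> ordLess \<longrightarrow> (card_of (Func A (UNIV :: 'k set)), r) \<in> ordLeq"
    and omega_pow: "\<forall>A :: 'k set. (card_of A, r) \<in> ordLess \<longrightarrow> (card_of (Func (UNIV :: nat set) A), r) \<in> ordLess"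
  shows "\<exists>X. krep r (I0 r) X \<and>
    (\<forall>d. klimit r d \<longrightarrow>
      (\<forall>\<nu>\<in>I0 r. \<nu> \<notin> X d \<longrightarrow>
        (\<exists>b. kless r b d \<and>
          (\<forall>\<sigma>\<in>X d. Iless r \<nu> \<sigma> \<longrightarrow>
             (\<exists>\<sigma>'\<in>X b. Iless r \<sigma>' \<sigma> \<and> Iless r \<nu> \<sigma>')))))"
proof (intro exI conjI)
  have "|UNIV :: nat set| \<le>o |UNIV :: 'k set|"
    using uncountable card_of_Field_ordIso[OF card] fld ordLess_imp_ordLeq ordLeq_ordIso_trans ordIso_symmetric by metis
  then obtain h :: "nat \<Rightarrow> 'k" where h: "inj h" using card_of_ordLeq[of "UNIV::nat set" "UNIV :: 'k set"] by auto
  have inf: "infinite (UNIV :: 'k set)" using h finite_imageD[of h UNIV] by (metis finite_subset subset_UNIV infinite_UNIV_nat)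
  show "krep r (I0 r) (XX r)"
    unfolding krep_def
    using XX_sub[OF card fld] XX_mono[OF card fld] XX_cont[OF card fld] XX_size[OF card fld uncountable omega_pow]
      XX_union[OF card fld inf] by blast
  show "\<forall>d. klimit r d \<longrightarrow>
      (\<forall>\<nu>\<in>I0 r. \<nu> \<notin> XX r d \<longrightarrow>
        (\<exists>b. kless r b d \<and>
          (\<forall>\<sigma>\<in>XX r d. Iless r \<nu> \<sigma> \<longrightarrow>
             (\<exists>\<sigma>'\<in>XX r b. Iless r \<sigma>' \<sigma> \<and> Iless r \<nu> \<sigma>'))))"
    using XX_key[OF card fld] by blast
qed

end
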